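(* Let $q\ge1$, $\lambda$ a primitive $q$th root of unity, $g(z)=\lambda z+O(z^2)$ holomorphic near $0$ with $f:=g^{\circ q}$ of the form $f(z)=z+z^{q+1}+bz^{2q+1}+O(z^{2q+2})$, and $0<r_0<1$ such that $f$ is univalent in a neighborhood of $\overline{\mathbb D}(0,r_0)$, $0$ is its only fixed point in $\overline{\mathbb D}(0,r_0)$ and $\operatorname{Re}(f')>0$ there. Let $g_n(z)=\lambda_nz+O(z^2)$, $|\lambda_n|\ne1$, with $f_n:=g_n^{\circ q}$ holomorphic near $\overline{\mathbb D}(0,r_0)$ and $f_n\to f$ uniformly on $\overline{\mathbb D}(0,r_0)$. Let $0<r_1<r_0/2$ be such that $\overline{\mathbb D}(0,r_1)$ is mapped univalently into $\mathbb D(0,r_0)$ by $f$ and $f^{-1}$ and $\sup_{|z|\le r_1}|f_n(z)-z|\le r_1/2$ for all large $n$. Let $\omega,\omega_n$ be the Buff forms of $f,f_n$, and for $0\le t\le1$ let $$u_t(z)=-t+\int_{[z,(1-t)z+tf(z)]}\omega,\qquad u_{n,t}(z)=-t+\int_{[z,(1-t)z+tf_n(z)]}\omega_n,$$ regarded as holomorphic functions on a neighborhood of $\overline{\mathbb D}(0,r_1)$ (extended holomorphically across the fixed points). Then for every $\epsilon>0$ there is $N\ge1$ such that $|u_{n,t}(z)-u_t(z)|<\epsilon t$ for all $z\in\overline{\mathbb D}(0,r_1)$, $0<t\le1$ and $n\ge N$.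
   Context: $\operatorname{Log}$ is the principal branch of the logarithm; the Buff form of a holomorphic $h$ is $\omega_h=\frac{h'(z)-1}{(h(z)-z)\operatorname{Log}h'(z)}\,dz$ (factor $(h'-1)/\operatorname{Log}h'$ read as $1$ where $h'=1$), meromorphic with poles at fixed points of $h$. For non-fixed $z$ the segments of integration avoid the fixed points, and the functions $u_t,u_{n,t}$ extend holomorphically across the fixed points of $f$, resp. $f_n$. *)

theory Defs
  imports "HOL-Complex_Analysis.Complex_Analysis"
begin

text \<open>Coefficient of the Buff form of h:
  omega_h = (h'(z) - 1) / ((h(z) - z) Log h'(z)) dz, where the factor
  (h' - 1)/Log h' is read as 1 where h' = 1. Ln is the principal logarithm.\<close>
definition buff_coef :: "(complex \<Rightarrow> complex) \<Rightarrow> complex \<Rightarrow> complex" where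
  "buff_coef h z =
     (if deriv h z = 1 then 1 else (deriv h z - 1) / Ln (deriv h z)) / (h z - z)"

definition buff_int :: "(complex \<Rightarrow> complex) \<Rightarrow> complex \<Rightarrow> complex \<Rightarrow> complex" where
  "buff_int h a b = contour_integral (linepath a b) (buff_coef h)"

end

theory Submission
  imports Defs
begin

definition phi :: "complex \<Rightarrow> complex" where
  "phi x = (if x = 1 then 1 else (x - 1) / Ln x)"

lemma buff_coef_phi: "buff_coef h z = phi (deriv h z) / (h z - z)"
  by (simp add: buff_coef_def phi_def)

lemma phi_cont_at:
  assumes "Re x > 0" shows "isCont phi x"
proof (cases "x = 1")
  case True
  have nn: "(1::complex) \<notin> \<real>\<^sub>\<le>\<^sub>0" by (simp add: nonpos_Reals_def)
  have "((\<lambda>y. (Ln y - Ln 1) / (y - 1)) \<longlongrightarrow> inverse 1) (at (1::complex))"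
    using has_field_derivative_Ln[OF nn] unfolding has_field_derivative_iff by simp
  hence "((\<lambda>y. inverse ((Ln y - Ln 1) / (y - 1))) \<longlongrightarrow> inverse (inverse 1)) (at (1::complex))"
    by (intro tendsto_inverse) auto
  hence lim: "((\<lambda>y. inverse ((Ln y - Ln 1) / (y - 1))) \<longlongrightarrow> 1) (at (1::complex))" by simp
  have "\<forall>\<^sub>F y in at (1::complex). inverse ((Ln y - Ln 1) / (y - 1)) = phi y"
    using eventually_at_ball[of 1 "1::complex" UNIV]
    by (auto simp: phi_def eventually_at_filter)
  hence "(phi \<longlongrightarrow> 1) (at 1)" using lim tendsto_cong by fastforce
  then show ?thesis using True by (simp add: isCont_def phi_def)
next
  case False
  have xn: "x \<notin> \<real>\<^sub>\<le>\<^sub>0" using assms by (auto simp: nonpos_Reals_def complex_is_Real_iff)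
  have "isCont (\<lambda>y. (y - 1) / Ln y) x"
    using xn False by (intro continuous_intros) auto
  moreover have "\<forall>\<^sub>F y in nhds x. (y - 1) / Ln y = phi y"
  proof -
    have "open (- {1::complex})" by auto
    then have "\<forall>\<^sub>F y in nhds x. y \<in> - {1::complex}"
      using False by (intro eventually_nhds_in_open) auto
    then show ?thesis by eventually_elim (auto simp: phi_def)
  qed
  ultimately show ?thesis
    using isCont_cong[of "\<lambda>y. (y - 1) / Ln y" phi x] by blast
qed

lemma phi_cont: "continuous_on {x. Re x > 0} phi"
  by (intro continuous_at_imp_continuous_on ballI phi_cont_at) auto

lemma funpow_holo:
  assumes "g holomorphic_on U" "\<forall>k<q. (g^^k) ` W \<subseteq> U"
  shows "k \<le> q \<Longrightarrow> (g^^k) holomorphic_on W"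
proof (induction k)
  case 0 then show ?case by (simp add: holomorphic_on_id)
next
  case (Suc k)
  then have "(g ^^ k) holomorphic_on W" "(g^^k) ` W \<subseteq> U" using assms by auto
  then have "(g \<circ> g^^k) holomorphic_on W"
    by (intro holomorphic_on_compose_gen[OF _ assms(1)])
  then show ?case by (metis funpow.simps(2))
qed

lemma deriv_ulim:
  fixes fs :: "nat \<Rightarrow> complex \<Rightarrow> complex"
  assumes ul: "uniform_limit (cball 0 R) fs f sequentially"
    and hs: "\<And>n. fs n holomorphic_on A n" "\<And>n. open (A n)" "\<And>n. cball 0 R \<subseteq> A n"
    and hf: "f holomorphic_on B" "open B" "cball 0 R \<subseteq> B"
    and rho: "0 < \<rho>" "\<rho> < R"
  shows "uniform_limit (cball 0 \<rho>) (\<lambda>n. deriv (fs n)) (deriv f) sequentially"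
proof (rule uniform_limitI)
  fix e :: real assume e: "e > 0"
  define \<delta> where "\<delta> = R - \<rho>"
  have d: "\<delta> > 0" using rho by (simp add: \<delta>_def)
  have "\<forall>\<^sub>F n in sequentially. \<forall>x\<in>cball 0 R. dist (fs n x) (f x) < e * \<delta> / 2"
    using uniform_limitD[OF ul, of "e * \<delta> / 2"] e d by simp
  then show "\<forall>\<^sub>F n in sequentially. \<forall>x\<in>cball 0 \<rho>. dist (deriv (fs n) x) (deriv f x) < e"
  proof eventually_elim
    case (elim n)
    show ?case
    proof
      fix w :: complex assume w: "w \<in> cball 0 \<rho>"
      have sub: "cball w \<delta> \<subseteq> cball 0 R"
        using w by (auto simp: \<delta>_def dist_norm) (smt (verit) norm_triangle_ineq2 norm_minus_commute)
      define h where "h = (\<lambda>z. fs n z - f z)"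
      have hh: "h holomorphic_on (A n \<inter> B)" unfolding h_def
        by (intro holomorphic_intros holomorphic_on_subset[OF hs(1)] holomorphic_on_subset[OF hf(1)]) auto
      have subAB: "cball w \<delta> \<subseteq> A n \<inter> B" using sub hs(3) hf(3) by blast
      have "norm ((deriv ^^ 1) h w) \<le> fact 1 * (e * \<delta> / 2) / \<delta> ^ 1"
      proof (rule Cauchy_inequality)
        show "h holomorphic_on ball w \<delta>" using hh subAB by (meson ball_subset_cball holomorphic_on_subset subset_trans)
        show "continuous_on (cball w \<delta>) h" using hh subAB
          by (meson holomorphic_on_imp_continuous_on holomorphic_on_subset)
        show "0 < \<delta>" by fact
        fix x assume "norm (w - x) = \<delta>"
        then have "x \<in> cball 0 R" using sub by (auto simp: dist_norm)
        then have "dist (fs n x) (f x) < e * \<delta> / 2" using elim by blast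
        then show "norm (h x) \<le> e * \<delta> / 2" by (simp add: h_def dist_norm)
      qed
      then have "norm (deriv h w) \<le> e / 2" using d by simp
      moreover have "deriv h w = deriv (fs n) w - deriv f w"
      proof -
        have wA: "w \<in> A n" "w \<in> B" using subAB d by auto
        have "fs n field_differentiable at w"
          using holomorphic_on_imp_differentiable_at[OF hs(1) hs(2) wA(1)] .
        moreover have "f field_differentiable at w"
          using holomorphic_on_imp_differentiable_at[OF hf(1) hf(2) wA(2)] .
        ultimately show ?thesis unfolding h_def by (rule deriv_diff)
      qed
      ultimately show "dist (deriv (fs n) w) (deriv f w) < e"
        using e by (simp add: dist_norm)
    qed
  qed
qed

lemma uniform_limit_compose_uc:
  fixes \<phi> :: "'a::metric_space \<Rightarrow> 'b::metric_space"
  assumes uc: "uniformly_continuous_on C \<phi>"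
    and ul: "uniform_limit K fs f F"
    and fC: "\<forall>w\<in>K. f w \<in> C"
    and fsC: "\<forall>\<^sub>F n in F. \<forall>w\<in>K. fs n w \<in> C"
  shows "uniform_limit K (\<lambda>n w. \<phi> (fs n w)) (\<lambda>w. \<phi> (f w)) F"
proof (rule uniform_limitI)
  fix e :: real assume e: "e > 0"
  obtain d where d: "d > 0" "\<forall>x\<in>C. \<forall>x'\<in>C. dist x' x < d \<longrightarrow> dist (\<phi> x') (\<phi> x) < e"
    using uc e unfolding uniformly_continuous_on_def by metis
  show "\<forall>\<^sub>F n in F. \<forall>x\<in>K. dist (\<phi> (fs n x)) (\<phi> (f x)) < e"
    using uniform_limitD[OF ul d(1)] fsC
    by eventually_elim (use d fC in blast)
qed


theorem lemma4p2:
  fixes q :: nat and lam b :: complex and g :: "complex \<Rightarrow> complex"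
    and U W :: "complex set" and r0 r1 :: real
    and lams :: "nat \<Rightarrow> complex" and gs :: "nat \<Rightarrow> complex \<Rightarrow> complex"
    and Us Ws :: "nat \<Rightarrow> complex set"
    and u :: "real \<Rightarrow> complex \<Rightarrow> complex"
    and us :: "nat \<Rightarrow> real \<Rightarrow> complex \<Rightarrow> complex"
  assumes q: "q \<ge> 1"
    and lam_root: "lam ^ q = 1" and lam_prim: "\<forall>k. 0 < k \<and> k < q \<longrightarrow> lam ^ k \<noteq> 1"
    and g_hol: "open U" "0 \<in> U" "g holomorphic_on U" "g 0 = 0" "deriv g 0 = lam"
    and f_exp: "\<exists>h \<rho>. \<rho> > 0 \<and> h holomorphic_on ball 0 \<rho> \<and>
        (\<forall>z\<in>ball 0 \<rho>. (g ^^ q) z = z + z ^ (q + 1) + b * z ^ (2 * q + 1) + z ^ (2 * q + 2) * h z)"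
    and r0: "0 < r0" "r0 < 1"
    and W: "open W" "cball 0 r0 \<subseteq> W" "\<forall>k<q. (g ^^ k) ` W \<subseteq> U" "inj_on (g ^^ q) W"
    and f_fix: "\<forall>z\<in>cball 0 r0. (g ^^ q) z = z \<longrightarrow> z = 0"
    and f_re: "\<forall>z\<in>cball 0 r0. Re (deriv (g ^^ q) z) > 0"
    and gs_hol: "\<And>n. open (Us n) \<and> 0 \<in> Us n \<and> gs n holomorphic_on Us n \<and> gs n 0 = 0
        \<and> deriv (gs n) 0 = lams n \<and> norm (lams n) \<noteq> 1"
    and Ws: "\<And>n. open (Ws n) \<and> cball 0 r0 \<subseteq> Ws n \<and> (\<forall>k<q. (gs n ^^ k) ` Ws n \<subseteq> Us n)"
    and conv: "uniform_limit (cball 0 r0) (\<lambda>n. gs n ^^ q) (g ^^ q) sequentially"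
    and r1: "0 < r1" "r1 < r0 / 2"
    and r1_f: "inj_on (g ^^ q) (cball 0 r1)" "(g ^^ q) ` cball 0 r1 \<subseteq> ball 0 r0"
    and r1_finv: "cball 0 r1 \<subseteq> (g ^^ q) ` W"
        "inj_on (inv_into W (g ^^ q)) (cball 0 r1)"
        "inv_into W (g ^^ q) ` cball 0 r1 \<subseteq> ball 0 r0"
    and r1_fs: "\<forall>\<^sub>F n in sequentially. \<forall>z\<in>cball 0 r1. norm ((gs n ^^ q) z - z) \<le> r1 / 2"
    and u_def: "\<And>t. 0 \<le> t \<Longrightarrow> t \<le> 1 \<Longrightarrow>
        (\<exists>S. open S \<and> cball 0 r1 \<subseteq> S \<and> u t holomorphic_on S) \<and>
        (\<forall>z\<in>cball 0 r1. (g ^^ q) z \<noteq> z \<longrightarrow>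
           u t z = - of_real t + buff_int (g ^^ q) z ((1 - of_real t) * z + of_real t * (g ^^ q) z))"
    and us_def: "\<forall>\<^sub>F n in sequentially. \<forall>t. 0 \<le> t \<and> t \<le> 1 \<longrightarrow>
        (\<exists>S. open S \<and> cball 0 r1 \<subseteq> S \<and> us n t holomorphic_on S) \<and>
        (\<forall>z\<in>cball 0 r1. (gs n ^^ q) z \<noteq> z \<longrightarrow>
           us n t z = - of_real t + buff_int (gs n ^^ q) z ((1 - of_real t) * z + of_real t * (gs n ^^ q) z))"
  shows "\<forall>\<epsilon>>0. \<exists>N\<ge>1. \<forall>n\<ge>N. \<forall>z\<in>cball 0 r1. \<forall>t. 0 < t \<and> t \<le> 1 \<longrightarrow>
            norm (us n t z - u t z) < \<epsilon> * t"
proof -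
  define F where "F = g ^^ q"
  define Fs where "Fs = (\<lambda>n. gs n ^^ q)"
  have FW: "F holomorphic_on W" using funpow_holo[OF g_hol(3) W(3), of q] by (simp add: F_def)
  have FsW: "Fs n holomorphic_on Ws n" for n
    using funpow_holo[of "gs n" "Us n" q "Ws n" q] gs_hol[of n] Ws[of n] by (simp add: Fs_def)
  define \<rho> where "\<rho> = 3 * r1 / 2"
  have rho: "0 < \<rho>" "\<rho> < r0" using r1 by (auto simp: \<rho>_def)
  define K where "K = cball 0 \<rho> - ball (0::complex) (r1/2)"
  have Kc: "compact K" by (simp add: K_def compact_diff)
  have K_sub: "K \<subseteq> cball 0 \<rho>" by (auto simp: K_def)
  have Kr0: "K \<subseteq> cball 0 r0" using K_sub rho by auto
  have KW: "K \<subseteq> W" using Kr0 W(2) by auto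
  have KWs: "K \<subseteq> Ws n" for n using Kr0 Ws[of n] by auto
  have Kne: "K \<noteq> {}"
  proof -
    have "complex_of_real r1 \<in> K" using r1 by (auto simp: K_def \<rho>_def)
    then show ?thesis by auto
  qed
  have sph: "z + of_real \<sigma> * d \<in> K"
    if "z \<in> sphere 0 r1" "norm d \<le> r1/2" "0 \<le> \<sigma>" "\<sigma> \<le> 1" for z d \<sigma>
  proof -
    have n1: "norm (of_real \<sigma> * d) \<le> r1/2"
      using that by (simp add: norm_mult) (smt (verit) mult_left_le_one_le norm_ge_zero)
    have "norm (z + of_real \<sigma> * d) \<le> norm z + norm (of_real \<sigma> * d)" by (rule norm_triangle_ineq)
    moreover have "norm z - norm (of_real \<sigma> * d) \<le> norm (z + of_real \<sigma> * d)"
      by (metis diff_minus_eq_add norm_minus_cancel norm_triangle_ineq2)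
    ultimately show ?thesis using n1 that(1) by (auto simp: K_def \<rho>_def)
  qed
  have ulF: "uniform_limit (cball 0 r0) Fs F sequentially" using conv by (simp add: F_def Fs_def)
  have uld: "uniform_limit (cball 0 \<rho>) (\<lambda>n. deriv (Fs n)) (deriv F) sequentially"
    by (rule deriv_ulim[OF ulF FsW _ _ FW W(1) W(2) rho]) (use Ws in auto)
  have uldK: "uniform_limit K (\<lambda>n. deriv (Fs n)) (deriv F) sequentially"
    by (rule uniform_limit_on_subset[OF uld K_sub])
  have ulK: "uniform_limit K Fs F sequentially"
    by (rule uniform_limit_on_subset[OF ulF Kr0])
  have dFcont: "continuous_on K (deriv F)"
    using holomorphic_deriv[OF FW W(1)] KW
    by (meson holomorphic_on_imp_continuous_on holomorphic_on_subset)
  have Fcont: "continuous_on K F"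
    using FW KW by (meson holomorphic_on_imp_continuous_on holomorphic_on_subset)
  have Fnfix: "\<forall>w\<in>K. F w \<noteq> w"
  proof
    fix w assume w: "w \<in> K"
    then have "w \<noteq> 0" using r1 by (auto simp: K_def)
    moreover have "w \<in> cball 0 r0" using w Kr0 by auto
    ultimately show "F w \<noteq> w" using f_fix by (auto simp: F_def)
  qed
  have dFre: "\<forall>w\<in>K. Re (deriv F w) > 0" using f_re Kr0 by (auto simp: F_def)
  obtain c where c: "c > 0" "\<forall>w\<in>K. c \<le> norm (F w - w)"
  proof -
    have "continuous_on K (\<lambda>w. norm (F w - w))" by (intro continuous_intros Fcont)
    then obtain x where x: "x \<in> K" "\<forall>y\<in>K. norm (F x - x) \<le> norm (F y - y)"
      using continuous_attains_inf[OF Kc Kne] by blast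
    show ?thesis using x Fnfix by (intro that[of "norm (F x - x)"]) auto
  qed
  obtain m where m: "m > 0" "\<forall>w\<in>K. m \<le> Re (deriv F w)"
  proof -
    have "continuous_on K (\<lambda>w. Re (deriv F w))" by (intro continuous_intros dFcont)
    then obtain x where x: "x \<in> K" "\<forall>y\<in>K. Re (deriv F x) \<le> Re (deriv F y)"
      using continuous_attains_inf[OF Kc Kne] by blast
    show ?thesis using x dFre by (intro that[of "Re (deriv F x)"]) auto
  qed
  obtain M where M: "\<forall>w\<in>K. norm (deriv F w) \<le> M"
  proof -
    have "continuous_on K (\<lambda>w. norm (deriv F w))" by (intro continuous_intros dFcont)
    then obtain x where x: "x \<in> K" "\<forall>y\<in>K. norm (deriv F y) \<le> norm (deriv F x)"
      using continuous_attains_sup[OF Kc Kne] by blast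
    show ?thesis using x by (intro that[of "norm (deriv F x)"]) auto
  qed
  define C where "C = {x::complex. m/2 \<le> Re x \<and> norm x \<le> M + 1}"
  have Cc: "compact C"
  proof -
    have "closed C" unfolding C_def by (intro closed_Collect_conj closed_Collect_le continuous_intros)
    moreover have "bounded C" unfolding C_def
      by (rule bounded_subset[OF bounded_cball[of 0 "M+1"]]) auto
    ultimately show ?thesis by (simp add: compact_eq_bounded_closed)
  qed
  have CRe: "C \<subseteq> {x. Re x > 0}" using m by (auto simp: C_def)
  have phiC: "continuous_on C phi" by (rule continuous_on_subset[OF phi_cont CRe])
  have phiuc: "uniformly_continuous_on C phi" by (rule compact_uniformly_continuous[OF phiC Cc])
  have dFC: "\<forall>w\<in>K. deriv F w \<in> C" using m M by (auto simp: C_def)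
  have ev_dFsC: "\<forall>\<^sub>F n in sequentially. \<forall>w\<in>K. deriv (Fs n) w \<in> C"
    using uniform_limitD[OF uldK, of "min (m/2) 1"] m(1)
  proof -
    have "\<forall>\<^sub>F n in sequentially. \<forall>w\<in>K. dist (deriv (Fs n) w) (deriv F w) < min (m/2) 1"
      using uniform_limitD[OF uldK, of "min (m/2) 1"] m(1) by simp
    then show ?thesis
    proof eventually_elim
      case (elim n)
      show ?case
      proof
        fix w assume w: "w \<in> K"
        have d: "norm (deriv (Fs n) w - deriv F w) < min (m/2) 1" using elim w by (simp add: dist_norm)
        have "\<bar>Re (deriv (Fs n) w - deriv F w)\<bar> \<le> norm (deriv (Fs n) w - deriv F w)" by (rule abs_Re_le_cmod)
        then have "m/2 \<le> Re (deriv (Fs n) w)" using d m(2) w by auto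
        moreover have "norm (deriv (Fs n) w) \<le> M + 1"
          using d M w norm_triangle_ineq2[of "deriv (Fs n) w" "deriv F w"] by auto
        ultimately show "deriv (Fs n) w \<in> C" by (simp add: C_def)
      qed
    qed
  qed
  have ulphi: "uniform_limit K (\<lambda>n w. phi (deriv (Fs n) w)) (\<lambda>w. phi (deriv F w)) sequentially"
    by (rule uniform_limit_compose_uc[OF phiuc uldK dFC ev_dFsC])
  have uldiff: "uniform_limit K (\<lambda>n w. Fs n w - w) (\<lambda>w. F w - w) sequentially"
    by (intro uniform_limit_intros ulK)
  have phidF_cont: "continuous_on K (\<lambda>w. phi (deriv F w))"
    by (rule continuous_on_compose2[OF phiC dFcont]) (use dFC in auto)
  have bdd: "bounded ((\<lambda>w. phi (deriv F w)) ` K)"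
    by (rule compact_imp_bounded[OF compact_continuous_image[OF phidF_cont Kc]])
  have ulPhi: "uniform_limit K (\<lambda>n w. buff_coef (Fs n) w) (\<lambda>w. buff_coef F w) sequentially"
    unfolding buff_coef_phi by (rule uniform_lim_divide[OF ulphi uldiff bdd]) (use c in auto)
  have PhiCont: "continuous_on K (buff_coef F)"
  proof -
    have "continuous_on K (\<lambda>w. phi (deriv F w) / (F w - w))"
      by (intro continuous_on_divide phidF_cont continuous_intros Fcont) (use Fnfix in auto)
    then show ?thesis by (simp add: buff_coef_phi[abs_def])
  qed
  obtain P where P: "P \<ge> 0" "\<forall>w\<in>K. norm (buff_coef F w) \<le> P"
  proof -
    have "continuous_on K (\<lambda>w. norm (buff_coef F w))" by (intro continuous_intros PhiCont)
    then obtain x where x: "x \<in> K" "\<forall>y\<in>K. norm (buff_coef F y) \<le> norm (buff_coef F x)"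
      using continuous_attains_sup[OF Kc Kne] by blast
    show ?thesis using x by (intro that[of "norm (buff_coef F x)"]) auto
  qed
  have Phiuc: "uniformly_continuous_on K (buff_coef F)"
    by (rule compact_uniformly_continuous[OF PhiCont Kc])
  have ev_nofix: "\<forall>\<^sub>F n in sequentially. \<forall>w\<in>K. Fs n w \<noteq> w"
  proof -
    have "\<forall>\<^sub>F n in sequentially. \<forall>w\<in>K. dist (Fs n w) (F w) < c"
      using uniform_limitD[OF ulK c(1)] .
    then show ?thesis
    proof eventually_elim
      case (elim n)
      show ?case
      proof (intro ballI notI)
        fix w assume w: "w \<in> K" and eq: "Fs n w = w"
        have "dist (Fs n w) (F w) < c" using elim w by blast
        then have "norm (F w - w) < c" using eq by (simp add: dist_norm norm_minus_commute)
        then show False using c(2) w by fastforce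
      qed
    qed
  qed
  have ev_PhinCont: "\<forall>\<^sub>F n in sequentially. continuous_on K (buff_coef (Fs n))"
    using ev_dFsC ev_nofix
  proof eventually_elim
    case (elim n)
    have dc: "continuous_on K (deriv (Fs n))"
      using holomorphic_deriv[OF FsW] Ws[of n] KWs[of n]
      by (meson holomorphic_on_imp_continuous_on holomorphic_on_subset)
    have fc: "continuous_on K (Fs n)"
      using FsW[of n] KWs[of n] by (meson holomorphic_on_imp_continuous_on holomorphic_on_subset)
    have "continuous_on K (\<lambda>w. phi (deriv (Fs n) w))"
      by (rule continuous_on_compose2[OF phiC dc]) (use elim in auto)
    then have "continuous_on K (\<lambda>w. phi (deriv (Fs n) w) / (Fs n w - w))"
      by (intro continuous_on_divide continuous_intros fc) (use elim in auto)
    then show ?case by (simp add: buff_coef_phi[abs_def])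
  qed
  have ev_small: "\<forall>\<^sub>F n in sequentially. \<forall>z\<in>cball 0 r1. norm (Fs n z - z) \<le> r1/2"
    using r1_fs by (simp add: Fs_def)
  have Fsmall: "\<forall>z\<in>cball 0 r1. norm (F z - z) \<le> r1/2"
  proof
    fix z :: complex assume z: "z \<in> cball 0 r1"
    then have z0: "z \<in> cball 0 r0" using r1 by auto
    have "((\<lambda>n. Fs n z - z) \<longlongrightarrow> F z - z) sequentially"
      by (intro tendsto_intros tendsto_uniform_limitI[OF ulF z0])
    moreover have "\<forall>\<^sub>F n in sequentially. norm (Fs n z - z) \<le> r1/2"
      using ev_small by eventually_elim (use z in auto)
    ultimately show "norm (F z - z) \<le> r1/2" by (intro Lim_norm_ubound) auto
  qed
  have rep: "((\<lambda>s. buff_coef h (linepath z (z + of_real t * (h z - z)) s) * (of_real t * (h z - z)))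
              has_integral buff_int h z (z + of_real t * (h z - z))) {0..1}"
    if hc: "continuous_on K (buff_coef h)" and z: "z \<in> sphere 0 r1" and hs: "norm (h z - z) \<le> r1/2"
      and t: "0 \<le> t" "t \<le> 1" for h z t
  proof -
    have seg: "closed_segment z (z + of_real t * (h z - z)) \<subseteq> K"
    proof
      fix x assume "x \<in> closed_segment z (z + of_real t * (h z - z))"
      then obtain v where v: "0 \<le> v" "v \<le> 1" "x = (1 - v) *\<^sub>R z + v *\<^sub>R (z + of_real t * (h z - z))"
        by (auto simp: in_segment)
      have "x = z + of_real (v * t) * (h z - z)" using v(3) by (simp add: scaleR_conv_of_real algebra_simps)
      moreover have "0 \<le> v * t" "v * t \<le> 1" using v t by (auto simp: mult_le_one)
      ultimately show "x \<in> K" using sph[OF z hs, of "v * t"] by simp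
    qed
    have "buff_coef h contour_integrable_on linepath z (z + of_real t * (h z - z))"
      by (rule contour_integrable_continuous_linepath[OF continuous_on_subset[OF hc seg]])
    then have "(buff_coef h has_contour_integral buff_int h z (z + of_real t * (h z - z))) (linepath z (z + of_real t * (h z - z)))"
      unfolding buff_int_def by (rule has_contour_integral_integral)
    then show ?thesis unfolding has_contour_integral_linepath by simp
  qed
  have lp: "linepath z (z + of_real t * d) s = z + of_real (s * t) * d" for z d :: complex and t s :: real
    by (simp add: linepath_def scaleR_conv_of_real algebra_simps)
  have bound: "\<forall>\<^sub>F n in sequentially. \<forall>z\<in>sphere 0 r1. \<forall>\<sigma>. 0 \<le> \<sigma> \<and> \<sigma> \<le> 1 \<longrightarrow>
      norm (buff_coef (Fs n) (z + of_real \<sigma> * (Fs n z - z)) * (Fs n z - z)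
            - buff_coef F (z + of_real \<sigma> * (F z - z)) * (F z - z)) \<le> \<delta>"
    if \<delta>: "\<delta> > 0" for \<delta>
  proof -
    define a where "a = \<delta> / (3 * (r1 + 1))"
    have a: "a > 0" using \<delta> r1 by (simp add: a_def)
    obtain \<eta> where \<eta>: "\<eta> > 0" "\<forall>x\<in>K. \<forall>x'\<in>K. dist x' x < \<eta> \<longrightarrow> dist (buff_coef F x') (buff_coef F x) < a"
      using Phiuc a unfolding uniformly_continuous_on_def by metis
    define b where "b = min \<eta> (\<delta> / (3 * (P + 1)))"
    have b: "b > 0" using \<eta> \<delta> P by (simp add: b_def)
    have E1: "\<forall>\<^sub>F n in sequentially. \<forall>w\<in>K. dist (buff_coef (Fs n) w) (buff_coef F w) < a"
      using uniform_limitD[OF ulPhi a] .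
    have E2: "\<forall>\<^sub>F n in sequentially. \<forall>z\<in>cball 0 r0. dist (Fs n z) (F z) < b"
      using uniform_limitD[OF ulF b] .
    show ?thesis using E1 E2 ev_small
    proof eventually_elim
      case (elim n)
      show ?case
      proof (intro ballI allI impI)
        fix z :: complex and \<sigma> :: real assume z: "z \<in> sphere 0 r1" and s: "0 \<le> \<sigma> \<and> \<sigma> \<le> 1"
        define dn where "dn = Fs n z - z"
        define d where "d = F z - z"
        define wn where "wn = z + of_real \<sigma> * dn"
        define w where "w = z + of_real \<sigma> * d"
        have zc: "z \<in> cball 0 r1" "z \<in> cball 0 r0" using z r1 by auto
        have dnb: "norm dn \<le> r1/2" using elim(3) zc by (simp add: dn_def)
        have db: "norm d \<le> r1/2" using Fsmall zc by (simp add: d_def)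
        have wnK: "wn \<in> K" using sph[OF z dnb] s by (simp add: wn_def)
        have wK: "w \<in> K" using sph[OF z db] s by (simp add: w_def)
        have dd: "norm (dn - d) < b" using elim(2) zc by (simp add: dn_def d_def dist_norm)
        have "wn - w = of_real \<sigma> * (dn - d)" by (simp add: wn_def w_def algebra_simps)
        then have "norm (wn - w) = \<sigma> * norm (dn - d)" using s by (simp add: norm_mult)
        also have "\<dots> \<le> norm (dn - d)" using s by (simp add: mult_left_le_one_le)
        finally have "norm (wn - w) < \<eta>" using dd b_def by linarith
        then have T2: "norm (buff_coef F wn - buff_coef F w) < a"
          using \<eta>(2) wnK wK by (simp add: dist_norm)
        have T1: "norm (buff_coef (Fs n) wn - buff_coef F wn) < a"
          using elim(1) wnK by (simp add: dist_norm)
        have T3: "norm (buff_coef F w) \<le> P" using P wK by auto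
        define A1 where "A1 = buff_coef (Fs n) wn - buff_coef F wn"
        define A2 where "A2 = buff_coef F wn - buff_coef F w"
        define A3 where "A3 = buff_coef F w"
        have eq: "buff_coef (Fs n) wn * dn - buff_coef F w * d = A1 * dn + A2 * dn + A3 * (dn - d)"
          by (simp add: A1_def A2_def A3_def algebra_simps)
        have tri: "norm (X + Y + Z) \<le> norm X + norm Y + norm Z" for X Y Z :: complex
          using norm_triangle_ineq[of "X + Y" Z] norm_triangle_ineq[of X Y] by linarith
        have "norm (buff_coef (Fs n) wn * dn - buff_coef F w * d)
             \<le> norm A1 * norm dn + norm A2 * norm dn + norm A3 * norm (dn - d)"
          unfolding eq using tri[of "A1 * dn" "A2 * dn" "A3 * (dn - d)"] by (simp add: norm_mult)
        also have "\<dots> \<le> a * (r1/2) + a * (r1/2) + P * b"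
        proof -
          have "norm A1 * norm dn \<le> a * (r1/2)"
            by (rule mult_mono) (use T1 dnb a in \<open>auto simp: A1_def\<close>)
          moreover have "norm A2 * norm dn \<le> a * (r1/2)"
            by (rule mult_mono) (use T2 dnb a in \<open>auto simp: A2_def\<close>)
          moreover have "norm A3 * norm (dn - d) \<le> P * b"
            by (rule mult_mono) (use T3 dd P in \<open>auto simp: A3_def\<close>)
          ultimately show ?thesis by linarith
        qed
        also have "\<dots> \<le> \<delta>"
        proof -
          have "a * r1 \<le> \<delta>/3" using r1 \<delta> by (simp add: a_def field_simps)
          moreover have "P * b \<le> P * (\<delta> / (3 * (P + 1)))" using P b by (intro mult_left_mono) (auto simp: b_def)
          moreover have "P * (\<delta> / (3 * (P + 1))) \<le> \<delta>/3" using P \<delta> by (simp add: field_simps)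
          moreover have "a * (r1/2) + a * (r1/2) = a * r1" by (simp add: field_simps)
          ultimately show ?thesis using \<delta> by linarith
        qed
        finally show "norm (buff_coef (Fs n) (z + of_real \<sigma> * (Fs n z - z)) * (Fs n z - z)
            - buff_coef F (z + of_real \<sigma> * (F z - z)) * (F z - z)) \<le> \<delta>"
          by (simp add: wn_def w_def dn_def d_def)
      qed
    qed
  qed
  show ?thesis
  proof (intro allI impI)
    fix \<epsilon> :: real assume \<epsilon>: "\<epsilon> > 0"
    have "\<forall>\<^sub>F n in sequentially. (\<forall>z\<in>sphere 0 r1. \<forall>\<sigma>. 0 \<le> \<sigma> \<and> \<sigma> \<le> 1 \<longrightarrow>
      norm (buff_coef (Fs n) (z + of_real \<sigma> * (Fs n z - z)) * (Fs n z - z)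
            - buff_coef F (z + of_real \<sigma> * (F z - z)) * (F z - z)) \<le> \<epsilon>/2)
      \<and> (\<forall>t. 0 \<le> t \<and> t \<le> 1 \<longrightarrow>
        (\<exists>S. open S \<and> cball 0 r1 \<subseteq> S \<and> us n t holomorphic_on S) \<and>
        (\<forall>z\<in>cball 0 r1. (gs n ^^ q) z \<noteq> z \<longrightarrow>
           us n t z = - of_real t + buff_int (gs n ^^ q) z ((1 - of_real t) * z + of_real t * (gs n ^^ q) z)))
      \<and> (\<forall>w\<in>K. Fs n w \<noteq> w) \<and> continuous_on K (buff_coef (Fs n))
      \<and> (\<forall>z\<in>cball 0 r1. norm (Fs n z - z) \<le> r1/2)"
      using bound[of "\<epsilon>/2"] \<epsilon> us_def ev_nofix ev_PhinCont ev_small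
      by (intro eventually_conj) auto
    then obtain N where N: "\<And>n. n \<ge> N \<Longrightarrow> (\<forall>z\<in>sphere 0 r1. \<forall>\<sigma>. 0 \<le> \<sigma> \<and> \<sigma> \<le> 1 \<longrightarrow>
      norm (buff_coef (Fs n) (z + of_real \<sigma> * (Fs n z - z)) * (Fs n z - z)
            - buff_coef F (z + of_real \<sigma> * (F z - z)) * (F z - z)) \<le> \<epsilon>/2)
      \<and> (\<forall>t. 0 \<le> t \<and> t \<le> 1 \<longrightarrow>
        (\<exists>S. open S \<and> cball 0 r1 \<subseteq> S \<and> us n t holomorphic_on S) \<and>
        (\<forall>z\<in>cball 0 r1. (gs n ^^ q) z \<noteq> z \<longrightarrow>
           us n t z = - of_real t + buff_int (gs n ^^ q) z ((1 - of_real t) * z + of_real t * (gs n ^^ q) z)))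
      \<and> (\<forall>w\<in>K. Fs n w \<noteq> w) \<and> continuous_on K (buff_coef (Fs n))
      \<and> (\<forall>z\<in>cball 0 r1. norm (Fs n z - z) \<le> r1/2)"
      unfolding eventually_sequentially by blast
    show "\<exists>N\<ge>1. \<forall>n\<ge>N. \<forall>z\<in>cball 0 r1. \<forall>t. 0 < t \<and> t \<le> 1 \<longrightarrow> norm (us n t z - u t z) < \<epsilon> * t"
    proof (intro exI[of _ "max N 1"] conjI allI impI ballI)
      fix n :: nat and z :: complex and t :: real assume n: "max N 1 \<le> n" and z: "z \<in> cball 0 r1" and t: "0 < t \<and> t \<le> 1"
      have Nn: "N \<le> n" using n by auto
      note NN = N[OF Nn]
      have bd: "\<forall>z\<in>sphere 0 r1. \<forall>\<sigma>. 0 \<le> \<sigma> \<and> \<sigma> \<le> 1 \<longrightarrow>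
        norm (buff_coef (Fs n) (z + of_real \<sigma> * (Fs n z - z)) * (Fs n z - z)
            - buff_coef F (z + of_real \<sigma> * (F z - z)) * (F z - z)) \<le> \<epsilon>/2" using NN by blast
      have usd: "(\<exists>S. open S \<and> cball 0 r1 \<subseteq> S \<and> us n t holomorphic_on S) \<and>
        (\<forall>z\<in>cball 0 r1. Fs n z \<noteq> z \<longrightarrow>
           us n t z = - of_real t + buff_int (Fs n) z ((1 - of_real t) * z + of_real t * Fs n z))"
        using NN t by (simp add: Fs_def)
      have nofix: "\<forall>w\<in>K. Fs n w \<noteq> w" and PnC: "continuous_on K (buff_coef (Fs n))"
        and smalln: "\<forall>z\<in>cball 0 r1. norm (Fs n z - z) \<le> r1/2" using NN by blast+
      have ud: "(\<exists>S. open S \<and> cball 0 r1 \<subseteq> S \<and> u t holomorphic_on S) \<and>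
        (\<forall>z\<in>cball 0 r1. F z \<noteq> z \<longrightarrow>
           u t z = - of_real t + buff_int F z ((1 - of_real t) * z + of_real t * F z))"
        using u_def[of t] t by (simp add: F_def)
      obtain S1 where S1: "open S1" "cball 0 r1 \<subseteq> S1" "us n t holomorphic_on S1" using usd by blast
      obtain S2 where S2: "open S2" "cball 0 r1 \<subseteq> S2" "u t holomorphic_on S2" using ud by blast
      define H where "H = (\<lambda>z. us n t z - u t z)"
      have Hh: "H holomorphic_on (S1 \<inter> S2)" unfolding H_def
        by (intro holomorphic_intros holomorphic_on_subset[OF S1(3)] holomorphic_on_subset[OF S2(3)]) auto
      have Hb: "norm (H \<zeta>) \<le> t * (\<epsilon>/2)" if \<zeta>: "\<zeta> \<in> sphere 0 r1" for \<zeta>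
      proof -
        have \<zeta>K: "\<zeta> \<in> K" using sph[OF \<zeta>, of 0 0] r1 by simp
        have \<zeta>c: "\<zeta> \<in> cball 0 r1" using \<zeta> by auto
        have e1: "(1 - of_real t) * \<zeta> + of_real t * F \<zeta> = \<zeta> + of_real t * (F \<zeta> - \<zeta>)"
          by (simp add: algebra_simps)
        have e2: "(1 - of_real t) * \<zeta> + of_real t * Fs n \<zeta> = \<zeta> + of_real t * (Fs n \<zeta> - \<zeta>)"
          by (simp add: algebra_simps)
        have uz: "u t \<zeta> = - of_real t + buff_int F \<zeta> (\<zeta> + of_real t * (F \<zeta> - \<zeta>))"
          using ud \<zeta>c Fnfix \<zeta>K e1 by metis
        have usz: "us n t \<zeta> = - of_real t + buff_int (Fs n) \<zeta> (\<zeta> + of_real t * (Fs n \<zeta> - \<zeta>))"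
          using usd \<zeta>c nofix \<zeta>K e2 by metis
        define d where "d = F \<zeta> - \<zeta>"
        define dn where "dn = Fs n \<zeta> - \<zeta>"
        have I1: "((\<lambda>s. buff_coef F (linepath \<zeta> (\<zeta> + of_real t * d) s) * (of_real t * d))
            has_integral buff_int F \<zeta> (\<zeta> + of_real t * d)) {0..1}"
          unfolding d_def by (rule rep[OF PhiCont \<zeta>]) (use Fsmall \<zeta>c t in auto)
        have I2: "((\<lambda>s. buff_coef (Fs n) (linepath \<zeta> (\<zeta> + of_real t * dn) s) * (of_real t * dn))
            has_integral buff_int (Fs n) \<zeta> (\<zeta> + of_real t * dn)) {0..1}"
          unfolding dn_def by (rule rep[OF PnC \<zeta>]) (use smalln \<zeta>c t in auto)
        have Id: "((\<lambda>s. buff_coef (Fs n) (linepath \<zeta> (\<zeta> + of_real t * dn) s) * (of_real t * dn)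
                     - buff_coef F (linepath \<zeta> (\<zeta> + of_real t * d) s) * (of_real t * d))
            has_integral (buff_int (Fs n) \<zeta> (\<zeta> + of_real t * dn) - buff_int F \<zeta> (\<zeta> + of_real t * d))) (cbox 0 1)"
          using has_integral_diff[OF I2 I1] by simp
        have pw: "norm (buff_coef (Fs n) (linepath \<zeta> (\<zeta> + of_real t * dn) s) * (of_real t * dn)
                     - buff_coef F (linepath \<zeta> (\<zeta> + of_real t * d) s) * (of_real t * d)) \<le> t * (\<epsilon>/2)"
          if s: "s \<in> cbox 0 1" for s :: real
        proof -
          have s01: "0 \<le> s * t" "s * t \<le> 1" using s t by (auto simp: mult_le_one)
          have "buff_coef (Fs n) (linepath \<zeta> (\<zeta> + of_real t * dn) s) * (of_real t * dn)
                     - buff_coef F (linepath \<zeta> (\<zeta> + of_real t * d) s) * (of_real t * d)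
              = of_real t * (buff_coef (Fs n) (\<zeta> + of_real (s * t) * dn) * dn
                     - buff_coef F (\<zeta> + of_real (s * t) * d) * d)"
            by (simp only: lp) (simp add: algebra_simps)
          moreover have "norm (buff_coef (Fs n) (\<zeta> + of_real (s * t) * dn) * dn
                     - buff_coef F (\<zeta> + of_real (s * t) * d) * d) \<le> \<epsilon>/2"
            using bd \<zeta> s01 unfolding d_def dn_def by blast
          ultimately show "norm (buff_coef (Fs n) (linepath \<zeta> (\<zeta> + of_real t * dn) s) * (of_real t * dn)
                     - buff_coef F (linepath \<zeta> (\<zeta> + of_real t * d) s) * (of_real t * d)) \<le> t * (\<epsilon>/2)"
            using t by (simp add: norm_mult mult_left_mono)
        qed
        have nn: "0 \<le> t * (\<epsilon>/2)" using t \<epsilon> by simp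
        have "norm (buff_int (Fs n) \<zeta> (\<zeta> + of_real t * dn) - buff_int F \<zeta> (\<zeta> + of_real t * d))
              \<le> t * (\<epsilon>/2)"
          using has_integral_bound[OF nn Id pw] by simp
        then show ?thesis using uz usz by (simp add: H_def d_def dn_def)
      qed
      have "norm (H z) \<le> t * (\<epsilon>/2)"
      proof (rule maximum_modulus_frontier[of H "cball 0 r1"])
        show "H holomorphic_on interior (cball 0 r1)"
        proof -
          have "ball 0 r1 \<subseteq> S1 \<inter> S2" using S1(2) S2(2) ball_subset_cball by blast
          then show ?thesis by (simp add: holomorphic_on_subset[OF Hh])
        qed
        show "continuous_on (closure (cball 0 r1)) H"
        proof -
          have "cball 0 r1 \<subseteq> S1 \<inter> S2" using S1(2) S2(2) by blast
          then show ?thesis by (simp add: holomorphic_on_imp_continuous_on holomorphic_on_subset[OF Hh])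
        qed
      qed (use Hb z in auto)
      moreover have "t * (\<epsilon>/2) < \<epsilon> * t" using t \<epsilon> by simp
      ultimately show "norm (us n t z - u t z) < \<epsilon> * t" unfolding H_def by linarith
    qed simp
  qed
qed

end
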